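(* For all integers $n\ge1$, $$\prod_{k=1}^n(1+z^k)=\prod_{j=1}^n\bigl(\phi_{2j}(z)\bigr)^{\lfloor\frac{n+j}{2j}\rfloor},$$ where $\phi_m(z)$ denotes the $m$th cyclotomic polynomial. *)

theory Defs
  imports Complex_Main "HOL-Computational_Algebra.Polynomial"
begin

definition cyclotomic :: "nat \<Rightarrow> complex poly" where
  "cyclotomic m = (\<Prod>k\<in>{k. 1 \<le> k \<and> k \<le> m \<and> coprime k m}.
      [:- cis (2 * pi * real k / real m), 1:])"

end

theory Submission imports Defs "HOL-Computational_Algebra.Fundamental_Theorem_Algebra" begin

lemma fiber:
  fixes m d :: nat
  assumes m: "m > 0" and dm: "d dvd m"
  shows "{k\<in>{1..m}. m div gcd k m = d} = (\<lambda>j. j*(m div d)) ` {j. 1\<le>j \<and> j\<le>d \<and> coprime j d}"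
proof -
  obtain e where me: "m = d*e" using dm by blast
  have d0: "d > 0" and e0: "e > 0" using m me by auto
  have ed: "m div d = e" using me d0 by simp
  show ?thesis unfolding ed
  proof (intro equalityI subsetI)
    fix k assume "k \<in> {k\<in>{1..m}. m div gcd k m = d}"
    hence k: "1 \<le> k" "k \<le> m" "m div gcd k m = d" by auto
    define g where "g = gcd k m"
    have gm: "g dvd m" "g dvd k" unfolding g_def by auto
    have g0: "g > 0" using m g_def by simp
    have "m = g * d" using gm(1) k(3) g_def by (metis dvd_mult_div_cancel)
    hence ge: "g = e" using me d0 by (metis mult.commute mult_right_cancel neq0_conv)
    obtain j where kj: "k = j*e" using gm(2) ge by (metis dvd_def mult.commute)
    have "e * gcd j d = e" using g_def ge kj me by (simp add: gcd_mult_distrib_nat mult.commute)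
    hence cop: "coprime j d" using e0 by (simp add: coprime_iff_gcd_eq_1)
    have "1 \<le> j" using k(1) kj by (cases j) auto
    moreover have "j \<le> d" using k(2) kj me e0 by (metis mult.commute mult_le_cancel1 neq0_conv)
    ultimately show "k \<in> (\<lambda>j. j * e) ` {j. 1 \<le> j \<and> j \<le> d \<and> coprime j d}" using kj cop by blast
  next
    fix k assume "k \<in> (\<lambda>j. j * e) ` {j. 1 \<le> j \<and> j \<le> d \<and> coprime j d}"
    then obtain j where j: "1\<le>j" "j\<le>d" "coprime j d" and kj: "k = j*e" by blast
    have "gcd k m = e * gcd j d" using kj me by (simp add: gcd_mult_distrib_nat mult.commute)
    hence "gcd k m = e" using j(3) by simp
    hence "m div gcd k m = d" using me e0 by simp
    moreover have "1 \<le> k" "k \<le> m" using j kj me e0 by auto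
    ultimately show "k \<in> {k\<in>{1..m}. m div gcd k m = d}" by auto
  qed
qed

lemma unity_prod:
  assumes m: "m > 0"
  shows "monom (1::complex) m - 1 = (\<Prod>k<m. [:-cis(2*pi*real k/real m),1:])"
proof -
  define p where "p = monom (1::complex) m - 1"
  have pz: "poly p z = z^m - 1" for z by (simp add: p_def poly_monom)
  have pd: "poly (pderiv p) z = of_nat m * z^(m-1)" for z
    by (simp add: p_def pderiv_diff pderiv_monom poly_monom)
  have rs: "rsquarefree p"
    unfolding rsquarefree_roots
  proof (intro allI notI)
    fix a assume "poly p a = 0 \<and> poly (pderiv p) a = 0"
    hence "a^m = 1" "of_nat m * a^(m-1) = 0" using pz pd by auto
    with m show False by (cases "a = 0") (auto simp: power_0_left)
  qed
  have "degree (monom (1::complex) m + - 1) = degree (monom (1::complex) m)"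
    by (rule degree_add_eq_left) (use m in \<open>simp add: degree_monom_eq\<close>)
  hence deg: "degree p = m" unfolding p_def by (simp add: degree_monom_eq)
  have lc: "lead_coeff p = 1" using deg m by (simp add: p_def)
  have "p = (\<Prod>z|poly p z = 0. [:-z, 1:])"
    using complex_poly_decompose_rsquarefree[OF rs] lc by simp
  also have "{z. poly p z = 0} = {z. z^m = 1}" using pz by auto
  also have "(\<Prod>z\<in>{z. z^m = (1::complex)}. [:-z, 1:]) = (\<Prod>k<m. [:-cis(2*pi*real k/real m),1:])"
    using prod.reindex_bij_betw[OF bij_betw_roots_unity[OF m], of "\<lambda>z. [:-z,1:]"] by simp
  finally show ?thesis by (simp add: p_def)
qed

lemma cyclo_prod:
  assumes m: "m > 0"
  shows "monom (1::complex) m - 1 = (\<Prod>d\<in>{d. d dvd m}. cyclotomic d)"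
proof -
  define f where "f k = [:-cis(2*pi*real k/real m),1::complex:]" for k :: nat
  have "monom (1::complex) m - 1 = (\<Prod>k<m. f k)" unfolding f_def by (rule unity_prod[OF m])
  also have "\<dots> = (\<Prod>k\<in>{1..m}. f k)"
  proof -
    have A: "{..<m} = insert 0 {1..<m}" using m by auto
    have B: "{1..m} = insert m {1..<m}" using m by auto
    have "f m = f 0" using m by (simp add: f_def complex_eq_iff)
    thus ?thesis unfolding A B by simp
  qed
  also have "\<dots> = (\<Prod>d\<in>{d. d dvd m}. \<Prod>k\<in>{k\<in>{1..m}. m div gcd k m = d}. f k)"
  proof (rule prod.group[symmetric])
    have "\<And>x. m div gcd x m dvd m" by (metis dvd_mult_div_cancel gcd_dvd2 dvd_triv_right)
    thus "(\<lambda>k. m div gcd k m) ` {1..m} \<subseteq> {d. d dvd m}" by auto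
  qed (use m in auto)
  also have "\<dots> = (\<Prod>d\<in>{d. d dvd m}. cyclotomic d)"
  proof (rule prod.cong[OF refl])
    fix d assume "d \<in> {d. d dvd m}"
    hence dm: "d dvd m" by simp
    obtain e where me: "m = d*e" using dm by blast
    have d0: "d > 0" and e0: "e > 0" using m me by auto
    have ed: "m div d = e" using me d0 by simp
    have inj: "inj_on (\<lambda>j. j*(m div d)) {j. 1\<le>j \<and> j\<le>d \<and> coprime j d}"
      using e0 ed by (auto simp: inj_on_def)
    show "(\<Prod>k\<in>{k\<in>{1..m}. m div gcd k m = d}. f k) = cyclotomic d"
      unfolding fiber[OF m dm] prod.reindex[OF inj] cyclotomic_def
    proof (rule prod.cong[OF refl])
      fix j show "(f \<circ> (\<lambda>j. j * (m div d))) j = [:- cis (2 * pi * real j / real d), 1:]"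
        unfolding f_def ed using d0 e0 me by (simp add: mult.assoc)
    qed
  qed
  finally show ?thesis .
qed

lemma one_plus:
  assumes k: "k > 0"
  shows "[:1:] + monom (1::complex) k = (\<Prod>d\<in>{d. d dvd 2*k \<and> \<not> d dvd k}. cyclotomic d)"
proof -
  have e1: "(monom (1::complex) k - 1) * ([:1:] + monom 1 k) = monom 1 (2*k) - 1"
    by (simp add: algebra_simps mult_monom mult_2 mult_2_right one_pCons)
  have U: "{d. d dvd 2*k} = {d. d dvd k} \<union> {d. d dvd 2*k \<and> \<not> d dvd k}" by auto
  have fin1: "finite {d. d dvd k}" using k by simp
  have fin2: "finite {d. d dvd 2*k \<and> \<not> d dvd k}"
    by (rule finite_subset[of _ "{d. d dvd 2*k}"]) (use k in auto)
  have "monom (1::complex) (2*k) - 1 = (\<Prod>d\<in>{d. d dvd 2*k}. cyclotomic d)"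
    by (rule cyclo_prod) (use k in simp)
  also have "\<dots> = (\<Prod>d\<in>{d. d dvd k}. cyclotomic d) * (\<Prod>d\<in>{d. d dvd 2*k \<and> \<not> d dvd k}. cyclotomic d)"
    unfolding U by (rule prod.union_disjoint[OF fin1 fin2]) auto
  also have "(\<Prod>d\<in>{d. d dvd k}. cyclotomic d) = monom (1::complex) k - 1"
    using cyclo_prod[OF k] by simp
  finally have "(monom (1::complex) k - 1) * ([:1:] + monom 1 k)
      = (monom (1::complex) k - 1) * (\<Prod>d\<in>{d. d dvd 2*k \<and> \<not> d dvd k}. cyclotomic d)"
    unfolding e1 .
  moreover have nz: "monom (1::complex) k - 1 \<noteq> 0"
  proof
    assume "monom (1::complex) k - 1 = 0"
    hence "poly (monom (1::complex) k - 1) 0 = 0" by simp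
    thus False using k by (simp add: poly_monom power_0_left)
  qed
  ultimately show ?thesis using mult_left_cancel[OF nz] by blast
qed

lemma D_eq:
  fixes k :: nat
  assumes k: "k > 0"
  shows "{d. d dvd 2*k \<and> \<not> d dvd k} = (\<lambda>j. 2*j) ` {j. j dvd k \<and> odd (k div j)}"
proof (intro equalityI subsetI)
  fix d assume "d \<in> {d. d dvd 2*k \<and> \<not> d dvd k}"
  hence d: "d dvd 2*k" "\<not> d dvd k" by auto
  have oddA: "odd (d::nat) \<Longrightarrow> d dvd 2*k \<Longrightarrow> d dvd k" for d
    by (smt (verit, ccfv_SIG) dvd_add_times_triv_right_iff dvd_refl dvd_trans
      even_Suc mult_Suc_right mult_dvd_mono mult_of_nat_commute of_nat_numeral)
  have "even d" using oddA d by blast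
  then obtain j where dj: "d = 2*j" by blast
  have "j dvd k" using d(1) dj by simp
  then obtain q where kq: "k = j*q" by blast
  have j0: "j > 0" using kq k by (cases j) auto
  have "odd q" using d(2) dj kq by auto
  hence "odd (k div j)" using kq j0 by simp
  thus "d \<in> (\<lambda>j. 2*j) ` {j. j dvd k \<and> odd (k div j)}" using dj \<open>j dvd k\<close> by blast
next
  fix d assume "d \<in> (\<lambda>j. 2*j) ` {j. j dvd k \<and> odd (k div j)}"
  then obtain j where dj: "d = 2*j" and j: "j dvd k" "odd (k div j)" by blast
  then obtain q where kq: "k = j*q" by blast
  have j0: "j > 0" using kq k by (cases j) auto
  have q: "odd q" using j(2) kq j0 by simp
  have "\<not> 2*j dvd j*q" using q j0 by (simp add: mult.commute[of 2 j] nat_mult_dvd_cancel1)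
  thus "d \<in> {d. d dvd 2*k \<and> \<not> d dvd k}" using dj kq by auto
qed

lemma card_K:
  assumes j: "j > 0"
  shows "card {k\<in>{1..n}. j dvd k \<and> odd (k div j)} = (n + j) div (2*j)"
proof -
  have "{k\<in>{1..n}. j dvd k \<and> odd (k div j)} = (\<lambda>i. j*(2*i+1)) ` {..<(n + j) div (2*j)}"
  proof (intro equalityI subsetI)
    fix k assume "k \<in> {k\<in>{1..n}. j dvd k \<and> odd (k div j)}"
    hence k: "1 \<le> k" "k \<le> n" "j dvd k" "odd (k div j)" by auto
    then obtain q where kq: "k = j*q" by blast
    have "odd q" using k(4) kq j by simp
    then obtain i where qi: "q = 2*i+1" by (metis oddE)
    have "j*(2*i+1) \<le> n" using k(2) kq qi by simp
    hence "2*j*(i+1) \<le> n + j" by (simp add: algebra_simps)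
    hence "i+1 \<le> (n+j) div (2*j)" using j by (metis div_le_mono nonzero_mult_div_cancel_left mult_eq_0_iff zero_neq_numeral neq0_conv)
    thus "k \<in> (\<lambda>i. j*(2*i+1)) ` {..<(n + j) div (2*j)}" using kq qi by force
  next
    fix k assume "k \<in> (\<lambda>i. j*(2*i+1)) ` {..<(n + j) div (2*j)}"
    then obtain i where i: "i < (n+j) div (2*j)" and ki: "k = j*(2*i+1)" by blast
    have "(i+1) * (2*j) \<le> ((n+j) div (2*j)) * (2*j)" using i by (intro mult_right_mono) auto
    also have "\<dots> \<le> n + j" by (metis div_mult_mod_eq le_add1)
    finally have "(i+1) * (2*j) \<le> n + j" .
    hence "k \<le> n" using ki by (simp add: algebra_simps)
    moreover have "1 \<le> k" using ki j by simp
    moreover have "k div j = 2*i+1" using ki j by simp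
    ultimately show "k \<in> {k\<in>{1..n}. j dvd k \<and> odd (k div j)}" using ki by auto
  qed
  moreover have "inj_on (\<lambda>i. j*(2*i+1)) {..<(n + j) div (2*j)}" using j by (auto simp: inj_on_def)
  ultimately show ?thesis by (simp add: card_image)
qed

theorem lemma5:
  fixes n :: nat
  assumes "n \<ge> 1"
  shows "(\<Prod>k=1..n. [:1:] + monom (1::complex) k)
       = (\<Prod>j=1..n. cyclotomic (2 * j) ^ ((n + j) div (2 * j)))"
proof -
  have "(\<Prod>k=1..n. [:1:] + monom (1::complex) k)
      = (\<Prod>k=1..n. \<Prod>j\<in>{j. j \<in> {1..n} \<and> (j dvd k \<and> odd (k div j))}. cyclotomic (2*j))"
  proof (rule prod.cong[OF refl])
    fix k assume "k \<in> {1..n}"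
    hence k: "k > 0" "k \<le> n" by auto
    have S: "{j. j dvd k \<and> odd (k div j)} = {j. j \<in> {1..n} \<and> (j dvd k \<and> odd (k div j))}"
      using k by (auto dest: dvd_imp_le intro: dvd_pos_nat)
    have inj: "inj_on (\<lambda>j::nat. 2*j) {j. j dvd k \<and> odd (k div j)}" by (auto simp: inj_on_def)
    show "[:1:] + monom (1::complex) k = (\<Prod>j\<in>{j. j \<in> {1..n} \<and> (j dvd k \<and> odd (k div j))}. cyclotomic (2*j))"
      unfolding one_plus[OF k(1)] D_eq[OF k(1)] prod.reindex[OF inj] S[symmetric] by (simp add: o_def)
  qed
  also have "\<dots> = (\<Prod>j=1..n. \<Prod>k\<in>{k. k \<in> {1..n} \<and> (j dvd k \<and> odd (k div j))}. cyclotomic (2*j))"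
    by (rule prod.swap_restrict) auto
  also have "\<dots> = (\<Prod>j=1..n. cyclotomic (2 * j) ^ ((n + j) div (2 * j)))"
  proof (rule prod.cong[OF refl])
    fix j assume "j \<in> {1..n}"
    hence j: "j > 0" by auto
    show "(\<Prod>k\<in>{k. k \<in> {1..n} \<and> (j dvd k \<and> odd (k div j))}. cyclotomic (2*j)) = cyclotomic (2 * j) ^ ((n + j) div (2 * j))"
      using card_K[OF j, of n] by simp
  qed
  finally show ?thesis .
qed

end
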